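(* Let $s\in\{0,1\}^n$, $p\in[0,1)$, $x\in\{0,1\}^k$ with $k\ge2$, and $i\in\{1,\dots,n-k+1\}$. Then $$K_{s,x}[i]=\frac{1}{(1-p)^k}\left(P_{s,x}[i]-\sum_{\ell=k+1}^{n}\sum_{y\in Y_\ell(x)}(-1)^{|y|-|x|+1}P_{s,y}[i]\binom{y}{x}'\left(\frac{p}{1-p}\right)^{\ell-k}\right).$$
   Context: Deletion channel: a trace $\tilde S$ of $s$ is obtained by deleting each bit of $s$ independently with probability $p$. Strings are indexed from 1, $s[a:b]=(s[a],\dots,s[b])$, and for a string $z$, $z[2:-2]$ denotes $z$ with its first and last symbols removed. For strings $y,z$, $\binom{y}{z}$ denotes the number of ways to delete $|y|-|z|$ symbols of $y$ to obtain $z$ (i.e., the number of index sets at which $z$ occurs as a subsequence of $y$), and $\binom{y}{z}'=\binom{y[2:-2]}{z[2:-2]}$. For a string $x$ of length $k$ and $\ell\ge k$, $Y_\ell(x)$ is the set of binary strings $y$ of length $\ell$ that are supersequences of $x$ with $y[1]=x[1]$ and $y[\ell]=x[k]$. For any binary string $x$ of length $m$, $K_{s,x}[i]=\sum_{j\ge i}\binom{j-1}{i-1}(1-p)^{i-1}p^{j-i}\mathbb 1\{s[j:j+m-1]=x\}$ (terms with $j+m-1>n$ are zero), and $P_{s,x}[i]=\Pr(\tilde S[i:i+m-1]=x)$ (zero if the trace is shorter than $i+m-1$). *)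

theory Defs
  imports Complex_Main "HOL-Library.Sublist"
begin

text \<open>Binary strings are bool lists; positions are 1-based in the paper.
  substr s a m is the length-m window s[a:a+m-1] (1-based a).\<close>

definition substr :: "bool list \<Rightarrow> nat \<Rightarrow> nat \<Rightarrow> bool list" where
  "substr s a m = take m (drop (a - 1) s)"

definition occurs_at :: "bool list \<Rightarrow> bool list \<Rightarrow> nat \<Rightarrow> bool" where
  "occurs_at s x j \<longleftrightarrow> 1 \<le> j \<and> j + length x - 1 \<le> length s \<and> substr s j (length x) = x"

text \<open>K_{s,x}[i]; terms with j > n vanish, so the sum is over i..n.\<close>
definition Kvec :: "real \<Rightarrow> bool list \<Rightarrow> bool list \<Rightarrow> nat \<Rightarrow> real" where
  "Kvec p s x i = (\<Sum>j\<in>{i..length s}. real ((j - 1) choose (i - 1)) * (1 - p) ^ (i - 1) * p ^ (j - i)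
      * (if occurs_at s x j then 1 else 0))"

text \<open>Deletion channel: the set D of retained (0-based) positions of s determines the trace
  nths s D; D has probability (1-p)^|D| p^(n-|D|).\<close>
definition trace_prob :: "real \<Rightarrow> bool list \<Rightarrow> nat set \<Rightarrow> real" where
  "trace_prob p s D = (1 - p) ^ card D * p ^ (length s - card D)"

text \<open>P_{s,x}[i] = Pr(trace[i:i+m-1] = x), zero if trace too short.\<close>
definition Pvec :: "real \<Rightarrow> bool list \<Rightarrow> bool list \<Rightarrow> nat \<Rightarrow> real" where
  "Pvec p s x i = (\<Sum>D\<in>Pow {0..<length s}. trace_prob p s D * (if occurs_at (nths s D) x i then 1 else 0))"

definition str_binom :: "bool list \<Rightarrow> bool list \<Rightarrow> nat" where
  "str_binom y z = card {I. I \<subseteq> {0..<length y} \<and> card I = length z \<and> nths y I = z}"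

definition inner :: "bool list \<Rightarrow> bool list" where
  "inner z = butlast (tl z)"

definition str_binom' :: "bool list \<Rightarrow> bool list \<Rightarrow> nat" where
  "str_binom' y z = str_binom (inner y) (inner z)"

definition Yset :: "nat \<Rightarrow> bool list \<Rightarrow> bool list set" where
  "Yset l x = {y. length y = l \<and> subseq x y \<and> hd y = hd x \<and> last y = last x}"

end

theory Submission
  imports Defs
begin

lemma Pow_Suc_split:
  "Pow {0..<Suc n} = (image Suc) ` Pow {0..<n} \<union> (\<lambda>D. insert 0 (Suc ` D)) ` Pow {0..<n}"
proof -
  have e: "{0..<Suc n} = insert 0 (Suc ` {0..<n})"
    by (metis atLeast0LessThan image_Suc_lessThan lessThan_Suc_eq_insert_0)
  have p: "Pow (Suc ` {0..<n}) = (image Suc) ` Pow {0..<n}"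
  proof
    show "Pow (Suc ` {0..<n}) \<subseteq> image Suc ` Pow {0..<n}"
    proof
      fix X assume "X \<in> Pow (Suc ` {0..<n})"
      then obtain Y where "Y \<subseteq> {0..<n}" "X = Suc ` Y" by (metis PowD subset_image_iff)
      thus "X \<in> image Suc ` Pow {0..<n}" by blast
    qed
  qed (auto simp del: image_Suc_atLeastLessThan)
  show ?thesis unfolding e Pow_insert p by auto
qed

lemma sum_Pow_Suc:
  fixes F :: "nat set \<Rightarrow> 'a::comm_monoid_add"
  shows "sum F (Pow {0..<Suc n}) = sum (\<lambda>D. F (Suc ` D)) (Pow {0..<n}) + sum (\<lambda>D. F (insert 0 (Suc ` D))) (Pow {0..<n})"
proof -
  have i1: "inj_on (image Suc) (Pow {0..<n})" by (simp add: inj_on_def inj_image_eq_iff)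
  have i2: "inj_on (\<lambda>D. insert 0 (Suc ` D)) (Pow {0..<n})"
  proof (rule inj_onI)
    fix A B assume "insert 0 (Suc ` A) = insert 0 (Suc ` B)"
    hence "Suc ` A = Suc ` B" by (metis Diff_insert_absorb image_iff nat.distinct(1))
    thus "A = B" by (simp add: inj_image_eq_iff)
  qed
  have d: "(image Suc) ` Pow {0..<n} \<inter> (\<lambda>D. insert 0 (Suc ` D)) ` Pow {0..<n} = {}" by auto
  show ?thesis unfolding Pow_Suc_split
    by (subst sum.union_disjoint) (auto simp: d sum.reindex[OF i1] sum.reindex[OF i2])
qed

definition E :: "real \<Rightarrow> bool list \<Rightarrow> (bool list \<Rightarrow> real) \<Rightarrow> real" where
  "E p t f = (\<Sum>D\<in>Pow {0..<length t}. trace_prob p t D * f (nths t D))"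

lemma Pvec_E: "Pvec p s y i = E p s (\<lambda>tr. if occurs_at tr y i then 1 else 0)"
  by (simp add: Pvec_def E_def)

lemma E_Nil: "E p [] f = f []"
  by (simp add: E_def trace_prob_def)

lemma nths_Suc_img: "nths (b # t) (Suc ` D) = nths t D"
  by (simp add: nths_Cons image_iff)

lemma nths_ins0_Suc_img: "nths (b # t) (insert 0 (Suc ` D)) = b # nths t D"
  by (simp add: nths_Cons image_iff)

lemma E_Cons: "E p (b # t) f = p * E p t f + (1 - p) * E p t (\<lambda>tr. f (b # tr))"
proof -
  have c1: "trace_prob p (b # t) (Suc ` D) = p * trace_prob p t D" if "D \<in> Pow {0..<length t}" for D
  proof -
    have "card D \<le> length t" using that by (metis PowD card_atLeastLessThan card_mono finite_atLeastLessThan diff_zero)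
    thus ?thesis by (simp add: trace_prob_def card_image Suc_diff_le)
  qed
  have c2: "trace_prob p (b # t) (insert 0 (Suc ` D)) = (1 - p) * trace_prob p t D" if "D \<in> Pow {0..<length t}" for D
  proof -
    have f: "finite D" using that finite_subset by blast
    have "card (insert 0 (Suc ` D)) = Suc (card D)" using f by (simp add: card_image image_iff)
    thus ?thesis by (simp add: trace_prob_def)
  qed
  show ?thesis
    unfolding E_def length_Cons sum_Pow_Suc nths_Suc_img nths_ins0_Suc_img sum_distrib_left
    by (intro arg_cong2[where f="(+)"] sum.cong refl) (simp_all add: c1 c2)
qed

lemma E_const: "E p t (\<lambda>_. a) = a"
  by (induction t) (simp_all add: E_Nil E_Cons algebra_simps)

lemma E_cong: "(\<And>tr. f tr = g tr) \<Longrightarrow> E p t f = E p t g"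
  by (simp add: E_def)

lemma E_add: "E p t (\<lambda>tr. f tr + g tr) = E p t f + E p t g"
  by (simp add: E_def algebra_simps sum.distrib)

lemma E_cmult: "E p t (\<lambda>tr. a * f tr) = a * E p t f"
  by (simp add: E_def algebra_simps sum_distrib_left)

lemma str_binom_sum: "str_binom y z = (\<Sum>I\<in>Pow {0..<length y}. if card I = length z \<and> nths y I = z then 1 else 0)"
proof -
  have "{I. I \<subseteq> {0..<length y} \<and> card I = length z \<and> nths y I = z} = {I \<in> Pow {0..<length y}. card I = length z \<and> nths y I = z}" by auto
  thus ?thesis unfolding str_binom_def by (simp add: sum.inter_filter[symmetric])
qed

lemma str_binom_Nil: "str_binom [] z = (if z = [] then 1 else 0)"
  by (auto simp: str_binom_sum)

lemma str_binom_Cons: "str_binom (a # T) z = str_binom T z + (case z of [] \<Rightarrow> 0 | c # z' \<Rightarrow> if a = c then str_binom T z' else 0)"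
proof -
  have c1: "card (Suc ` D) = card D" for D by (simp add: card_image)
  have c2: "card (insert 0 (Suc ` D)) = Suc (card D)" if "D \<in> Pow {0..<length T}" for D
  proof -
    have f: "finite D" using that finite_subset by blast
    thus ?thesis using f by (simp add: card_image image_iff)
  qed
  have "str_binom (a # T) z = str_binom T z + (\<Sum>D\<in>Pow {0..<length T}. if Suc (card D) = length z \<and> a # nths T D = z then 1 else 0)"
    unfolding str_binom_sum length_Cons sum_Pow_Suc nths_Suc_img nths_ins0_Suc_img c1
    by (intro arg_cong2[where f="(+)"] sum.cong refl) (simp_all add: c2)
  also have "\<dots> = str_binom T z + (case z of [] \<Rightarrow> 0 | c # z' \<Rightarrow> if a = c then str_binom T z' else 0)"
    by (cases z) (auto simp: str_binom_sum)
  finally show ?thesis .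
qed

lemma str_binom_long: "length T < length z \<Longrightarrow> str_binom T z = 0"
proof (induction T arbitrary: z)
  case Nil thus ?case by (auto simp: str_binom_Nil)
next
  case (Cons a T) thus ?case by (cases z) (auto simp: str_binom_Cons)
qed

lemma str_binom_self: "str_binom z z = 1"
  by (induction z) (auto simp: str_binom_Nil str_binom_Cons str_binom_long)

lemma str_binom_subseq: "str_binom T z \<noteq> 0 \<Longrightarrow> subseq z T"
proof (induction T arbitrary: z)
  case Nil thus ?case by (auto simp: str_binom_Nil split: if_splits)
next
  case (Cons a T) thus ?case by (cases z) (auto simp: str_binom_Cons split: if_splits intro: subseq_Cons')
qed

lemma occurs_at_Cons: "2 \<le> j \<Longrightarrow> occurs_at (b # t) x j \<longleftrightarrow> occurs_at t x (j - 1)"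
  by (cases j) (auto simp: occurs_at_def substr_def drop_Cons')

lemma occurs_at_1: "occurs_at t z 1 \<longleftrightarrow> prefix z t"
  by (auto simp: occurs_at_def substr_def prefix_def) (metis append_take_drop_id)

lemma Kvec_Cons_1: "Kvec p (b # t) x 1 = (if occurs_at (b # t) x 1 then 1 else 0) + p * Kvec p t x 1"
proof -
  have "Kvec p (b # t) x 1 = (\<Sum>j\<in>{1..Suc (length t)}. p ^ (j - 1) * (if occurs_at (b # t) x j then 1 else 0))"
    by (simp add: Kvec_def)
  also have "\<dots> = (if occurs_at (b # t) x 1 then 1 else 0) + (\<Sum>j\<in>{Suc 1..Suc (length t)}. p ^ (j - 1) * (if occurs_at (b # t) x j then 1 else 0))"
    by (subst sum.atLeast_Suc_atMost) auto
  also have "(\<Sum>j\<in>{Suc 1..Suc (length t)}. p ^ (j - 1) * (if occurs_at (b # t) x j then 1 else 0))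
      = (\<Sum>j\<in>{1..length t}. p ^ j * (if occurs_at t x j then 1 else 0))"
    by (subst sum.shift_bounds_cl_Suc_ivl) (simp add: occurs_at_Cons)
  also have "\<dots> = p * Kvec p t x 1"
    by (simp add: Kvec_def sum_distrib_left) (intro sum.cong refl, simp add: power_eq_if)
  finally show ?thesis .
qed

lemma Kvec_Cons_Suc:
  assumes "1 \<le> i"
  shows "Kvec p (b # t) x (Suc i) = p * Kvec p t x (Suc i) + (1 - p) * Kvec p t x i"
proof -
  let ?o = "\<lambda>j. if occurs_at t x j then 1 else (0::real)"
  have "Kvec p (b # t) x (Suc i) = (\<Sum>j\<in>{Suc i..Suc (length t)}. real ((j - 1) choose i) * (1 - p) ^ i * p ^ (j - Suc i) * (if occurs_at (b # t) x j then 1 else 0))"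
    by (simp add: Kvec_def)
  also have "\<dots> = (\<Sum>j\<in>{i..length t}. real (j choose i) * (1 - p) ^ i * p ^ (j - i) * ?o j)"
    using assms by (subst sum.shift_bounds_cl_Suc_ivl) (simp add: occurs_at_Cons)
  also have "\<dots> = (\<Sum>j\<in>{i..length t}. p * (real ((j - 1) choose i) * (1 - p) ^ i * p ^ (j - Suc i) * ?o j)
        + (1 - p) * (real ((j - 1) choose (i - 1)) * (1 - p) ^ (i - 1) * p ^ (j - i) * ?o j))"
  proof (intro sum.cong refl)
    fix j assume j: "j \<in> {i..length t}"
    obtain i' where i': "i = Suc i'" using assms by (cases i) auto
    obtain j' where j': "j = Suc j'" using j i' by (cases j) auto
    have pw: "(1 - p) * (1 - p) ^ i' = (1 - p) ^ i" using i' by simp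
    show "real (j choose i) * (1 - p) ^ i * p ^ (j - i) * ?o j =
        p * (real ((j - 1) choose i) * (1 - p) ^ i * p ^ (j - Suc i) * ?o j)
        + (1 - p) * (real ((j - 1) choose (i - 1)) * (1 - p) ^ (i - 1) * p ^ (j - i) * ?o j)"
    proof (cases "j = i")
      case True thus ?thesis using i' j' by (simp add: pw[symmetric] algebra_simps)
    next
      case False
      hence "j - i = Suc (j - Suc i)" using j by auto
      thus ?thesis using i' j' by (simp add: algebra_simps)
    qed
  qed
  also have "\<dots> = p * (\<Sum>j\<in>{i..length t}. real ((j - 1) choose i) * (1 - p) ^ i * p ^ (j - Suc i) * ?o j)
      + (1 - p) * Kvec p t x i"
    by (simp add: sum.distrib sum_distrib_left Kvec_def)
  also have "(\<Sum>j\<in>{i..length t}. real ((j - 1) choose i) * (1 - p) ^ i * p ^ (j - Suc i) * ?o j) = Kvec p t x (Suc i)"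
  proof (cases "i \<le> length t")
    case True
    show ?thesis unfolding Kvec_def using True assms
      by (subst sum.atLeast_Suc_atMost) auto
  next
    case False thus ?thesis by (simp add: Kvec_def)
  qed
  finally show ?thesis .
qed

lemma finite_len_le: "finite {v::bool list. length v \<le> L}"
  using finite_lists_length_le[of "UNIV::bool set" L] by simp

lemma len_le_Suc: "{v::bool list. length v \<le> Suc L} = insert [] (Cons True ` {v. length v \<le> L} \<union> Cons False ` {v. length v \<le> L})"
  apply (auto simp: image_iff)
  subgoal for v by (cases v) auto
  done

lemma sum_len_le_Suc:
  fixes g :: "bool list \<Rightarrow> real"
  shows "sum g {v. length v \<le> Suc L} = g [] + (\<Sum>v\<in>{v. length v \<le> L}. g (True # v) + g (False # v))"
proof -
  have d: "[] \<notin> Cons True ` {v. length v \<le> L} \<union> Cons False ` {v. length v \<le> L}" by auto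
  have d2: "Cons True ` {v. length v \<le> L} \<inter> Cons False ` {v. length v \<le> L} = {}" by auto
  show ?thesis unfolding len_le_Suc
    by (simp add: sum.insert[OF _ d] finite_len_le sum.union_disjoint[OF _ _ d2] sum.reindex sum.distrib)
qed

definition Phi where
  "Phi p c L v0 t = (\<Sum>v\<in>{v. length v \<le> L}. (-1)^(length v - length v0) * (p/(1-p))^(length v - length v0)
     * real (str_binom v v0) * E p t (\<lambda>tr. if prefix (v@[c]) tr then 1 else 0))"

lemma Phi_lemma:
  assumes "p < 1"
  shows "length t \<le> L \<Longrightarrow> Phi p c L v0 t = (1-p)^(Suc (length v0)) * (if prefix (v0@[c]) t then 1 else 0)"
proof (induction t arbitrary: L v0)
  case Nil thus ?case by (simp add: Phi_def E_Nil)
next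
  case (Cons b t)
  obtain L' where L: "L = Suc L'" and tL: "length t \<le> L'" using Cons.prems by (cases L) auto
  let ?r = "p/(1-p)"
  let ?h = "\<lambda>v0 v. (-1)^(length v - length v0) * ?r^(length v - length v0) * real (str_binom v v0)"
  let ?F = "\<lambda>v. E p t (\<lambda>tr. if prefix (v@[c]) tr then 1 else (0::real))"
  let ?G = "\<lambda>v. E p t (\<lambda>tr. if prefix (v@[c]) (b # tr) then 1 else (0::real))"
  let ?R = "\<lambda>v0. (1-p)^(Suc (length v0)) * (if prefix (v0@[c]) t then 1 else (0::real))"
  have q: "(1 - p) * ?r = p" using assms by simp
  have IH1: "Phi p c L v0 t = ?R v0" using Cons.IH Cons.prems by simp
  have IH2: "Phi p c L' w t = ?R w" for w using Cons.IH tL by simp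
  have "Phi p c L v0 (b # t) = (\<Sum>v\<in>{v. length v \<le> L}. p * (?h v0 v * ?F v) + (1 - p) * (?h v0 v * ?G v))"
    unfolding Phi_def E_Cons by (simp add: algebra_simps)
  also have "\<dots> = p * Phi p c L v0 t + (1 - p) * (\<Sum>v\<in>{v. length v \<le> L}. ?h v0 v * ?G v)"
    unfolding Phi_def by (simp only: sum.distrib sum_distrib_left)
  also have "(\<Sum>v\<in>{v. length v \<le> L}. ?h v0 v * ?G v) = ?h v0 [] * ?G [] + (\<Sum>v\<in>{v. length v \<le> L'}. ?h v0 (b # v) * ?F v)"
  proof -
    show ?thesis unfolding L sum_len_le_Suc by (cases b) (simp_all add: E_const)
  qed
  also have "?G [] = (if c = b then 1 else 0)" by (simp add: E_const)
  also have "?h v0 [] = (if v0 = [] then 1 else 0)" by (simp add: str_binom_Nil)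
  also have "(\<Sum>v\<in>{v. length v \<le> L'}. ?h v0 (b # v) * ?F v)
     = (\<Sum>v\<in>{v. length v \<le> L'}. (- ?r) * (?h v0 v * ?F v) + (case v0 of [] \<Rightarrow> 0 | a # w \<Rightarrow> if a = b then ?h w v * ?F v else 0))"
  proof (intro sum.cong refl)
    fix v :: "bool list"
    have s1: "(-1)^(length (b # v) - length v0) * ?r^(length (b # v) - length v0) * real (str_binom v v0)
        = - ?r * ((-1)^(length v - length v0) * ?r^(length v - length v0) * real (str_binom v v0))"
    proof (cases "length v0 \<le> length v")
      case True
      hence "length (b # v) - length v0 = Suc (length v - length v0)" by simp
      thus ?thesis by simp
    next
      case False thus ?thesis by (simp add: str_binom_long)
    qed
    show "?h v0 (b # v) * ?F v = (- ?r) * (?h v0 v * ?F v) + (case v0 of [] \<Rightarrow> 0 | a # w \<Rightarrow> if a = b then ?h w v * ?F v else 0)"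
    proof (cases v0)
      case Nil thus ?thesis using s1 by (simp add: str_binom_Cons)
    next
      case (Cons a w)
      show ?thesis using s1 unfolding Cons by (simp add: str_binom_Cons algebra_simps)
    qed
  qed
  also have "\<dots> = (- ?r) * Phi p c L' v0 t + (case v0 of [] \<Rightarrow> 0 | a # w \<Rightarrow> if a = b then Phi p c L' w t else 0)"
  proof (cases v0)
    case Nil thus ?thesis unfolding Phi_def by (simp add: sum_distrib_left)
  next
    case (Cons a w)
    show ?thesis unfolding Phi_def Cons list.case
      by (cases "a = b") (simp_all only: simp_thms if_True if_False sum.distrib sum_distrib_left add_0_right sum.neutral_const)
  qed
  finally have eq: "Phi p c L v0 (b # t) = p * Phi p c L v0 t + (1 - p) * ((if v0 = [] then 1 else 0) * (if c = b then 1 else 0)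
      + ((- ?r) * Phi p c L' v0 t + (case v0 of [] \<Rightarrow> 0 | a # w \<Rightarrow> if a = b then Phi p c L' w t else 0)))" .
  have qn: "1 - p \<noteq> 0" using assms by simp
  show ?case
  proof (cases v0)
    case Nil
    show ?thesis unfolding eq IH1 IH2 unfolding Nil using qn
      by (simp add: field_simps)
  next
    case (Cons a w)
    show ?thesis unfolding eq IH1 IH2 unfolding Cons using qn
      by (cases "a = b") (simp_all add: field_simps)
  qed
qed


lemma Pvec_Cons_Suc: "1 \<le> i \<Longrightarrow> Pvec p (b # s) y (Suc i) = p * Pvec p s y (Suc i) + (1 - p) * Pvec p s y i"
  by (simp add: Pvec_E E_Cons occurs_at_Cons)

lemma Pvec_Cons_1: "Pvec p (b # s) y 1 = p * Pvec p s y 1 + (1 - p) * E p s (\<lambda>tr. if occurs_at (b # tr) y 1 then 1 else 0)"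
  by (simp add: Pvec_E E_Cons)

lemma finite_Yset: "finite (Yset l x)"
proof -
  have "Yset l x \<subseteq> {y. set y \<subseteq> UNIV \<and> length y = l}" by (auto simp: Yset_def)
  thus ?thesis using finite_lists_length_eq[of "UNIV::bool set" l] finite_subset by auto
qed

lemma Yset_length: "y \<in> Yset l x \<Longrightarrow> length y = l"
  by (simp add: Yset_def)

lemma Yset_eq:
  assumes "x = a # v0 @ [c]" "2 \<le> l"
  shows "Yset l x = (\<lambda>v. a # v @ [c]) ` {v. length v = l - 2 \<and> subseq x (a # v @ [c])}"
proof
  show "Yset l x \<subseteq> (\<lambda>v. a # v @ [c]) ` {v. length v = l - 2 \<and> subseq x (a # v @ [c])}"
  proof
    fix y assume y: "y \<in> Yset l x"
    hence ly: "length y = l" and sy: "subseq x y" and hy: "hd y = a" and ty: "last y = c"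
      using assms by (auto simp: Yset_def)
    obtain a' w where yw: "y = a' # w" using ly assms(2) by (cases y) auto
    have "w \<noteq> []" using ly assms(2) yw by auto
    then obtain v c' where wv: "w = v @ [c']" by (metis rev_exhaust)
    have "y = a # v @ [c]" using yw wv hy ty by simp
    moreover have "length v = l - 2" using ly yw wv by simp
    ultimately show "y \<in> (\<lambda>v. a # v @ [c]) ` {v. length v = l - 2 \<and> subseq x (a # v @ [c])}"
      using sy by blast
  qed
next
  show "(\<lambda>v. a # v @ [c]) ` {v. length v = l - 2 \<and> subseq x (a # v @ [c])} \<subseteq> Yset l x"
    using assms by (auto simp: Yset_def)
qed

definition S where
  "S p x N s i = (\<Sum>l\<in>{length x..N}. \<Sum>y\<in>Yset l x. (-1)^(l - length x) * (p/(1-p))^(l - length x)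
      * real (str_binom' y x) * Pvec p s y i)"

lemma dsum_lin:
  fixes c A B :: "nat \<Rightarrow> bool list \<Rightarrow> real"
  shows "(\<Sum>l\<in>L. \<Sum>y\<in>Y l. c l y * (p * A l y + q * B l y)) = p * (\<Sum>l\<in>L. \<Sum>y\<in>Y l. c l y * A l y) + q * (\<Sum>l\<in>L. \<Sum>y\<in>Y l. c l y * B l y)"
  by (simp add: sum_distrib_left sum.distrib algebra_simps)

lemma S_Cons_Suc: "1 \<le> i \<Longrightarrow> S p x N (b # s) (Suc i) = p * S p x N s (Suc i) + (1 - p) * S p x N s i"
  unfolding S_def by (simp only: Pvec_Cons_Suc dsum_lin)

lemma S_Cons_1: "S p x N (b # s) 1 = p * S p x N s 1 + (1 - p) * (\<Sum>l\<in>{length x..N}. \<Sum>y\<in>Yset l x. (-1)^(l - length x) * (p/(1-p))^(l - length x)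
      * real (str_binom' y x) * E p s (\<lambda>tr. if occurs_at (b # tr) y 1 then 1 else 0))"
  unfolding S_def by (simp only: Pvec_Cons_1 dsum_lin)


lemma S2_lemma:
  assumes x: "x = a # v0 @ [c]" and N: "length s + 2 \<le> N"
  shows "(\<Sum>l\<in>{length x..N}. \<Sum>y\<in>Yset l x. (-1)^(l - length x) * (p/(1-p))^(l - length x)
      * real (str_binom' y x) * E p s (\<lambda>tr. if occurs_at (b # tr) y 1 then 1 else 0))
    = (if a = b then Phi p c (N - 2) v0 s else 0)"
proof -
  let ?H = "\<lambda>v. (-1)^(length v - length v0) * (p/(1-p))^(length v - length v0) * real (str_binom v v0)
     * E p s (\<lambda>tr. if prefix (v@[c]) tr then 1 else 0)"
  let ?T = "\<lambda>l y. (-1)^(l - length x) * (p/(1-p))^(l - length x)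
      * real (str_binom' y x) * E p s (\<lambda>tr. if occurs_at (b # tr) y 1 then 1 else 0)"
  have kx: "length x = length v0 + 2" using x by simp
  have step1: "(\<Sum>y\<in>Yset l x. ?T l y) = (if a = b then (\<Sum>v\<in>{v. length v = l - 2}. ?H v) else 0)"
    if l: "l \<in> {length x..N}" for l
  proof -
    have l2: "2 \<le> l" using l kx by auto
    have inj: "inj_on (\<lambda>v. a # v @ [c]) A" for A by (auto simp: inj_on_def)
    have t: "?T l (a # v @ [c]) = (if a = b then ?H v else 0)" if "length v = l - 2" for v
    proof -
      have e1: "str_binom' (a # v @ [c]) x = str_binom v v0" by (simp add: str_binom'_def inner_def x)
      have e2: "(occurs_at (b # tr) (a # v @ [c]) 1) = (a = b \<and> prefix (v @ [c]) tr)" for tr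
        unfolding occurs_at_1 by simp
      have e3: "l - length x = length v - length v0" using that kx by simp
      show ?thesis unfolding e1 e2 e3 by (cases "a = b") (simp_all add: E_const)
    qed
    have "(\<Sum>y\<in>Yset l x. ?T l y) = (\<Sum>v\<in>{v. length v = l - 2 \<and> subseq x (a # v @ [c])}. ?T l (a # v @ [c]))"
      unfolding Yset_eq[OF x l2] by (simp add: sum.reindex[OF inj])
    also have "\<dots> = (\<Sum>v\<in>{v. length v = l - 2}. ?T l (a # v @ [c]))"
    proof (rule sum.mono_neutral_left)
      show "finite {v::bool list. length v = l - 2}"
        using finite_lists_length_eq[of "UNIV::bool set" "l-2"] by simp
      show "{v. length v = l - 2 \<and> subseq x (a # v @ [c])} \<subseteq> {v. length v = l - 2}" by auto
      show "\<forall>v\<in>{v. length v = l - 2} - {v. length v = l - 2 \<and> subseq x (a # v @ [c])}. ?T l (a # v @ [c]) = 0"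
      proof
        fix v assume v: "v \<in> {v. length v = l - 2} - {v. length v = l - 2 \<and> subseq x (a # v @ [c])}"
        have "str_binom v v0 = 0"
        proof (rule ccontr)
          assume "str_binom v v0 \<noteq> 0"
          hence "subseq v0 v" by (rule str_binom_subseq)
          hence "subseq x (a # v @ [c])" unfolding x by (simp add: subseq_append)
          thus False using v by auto
        qed
        thus "?T l (a # v @ [c]) = 0" by (simp add: str_binom'_def inner_def x)
      qed
    qed
    also have "\<dots> = (\<Sum>v\<in>{v. length v = l - 2}. if a = b then ?H v else 0)"
      by (rule sum.cong[OF refl]) (simp only: t mem_Collect_eq)
    also have "\<dots> = (if a = b then (\<Sum>v\<in>{v. length v = l - 2}. ?H v) else 0)"
      by simp
    finally show ?thesis .
  qed
  show ?thesis
  proof (cases "a = b")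
    case False thus ?thesis using step1 by simp
  next
    case True
    let ?F = "\<lambda>m. (\<Sum>v\<in>{v. length v = m}. ?H v)"
    have "(\<Sum>l\<in>{length x..N}. \<Sum>y\<in>Yset l x. ?T l y) = (\<Sum>l\<in>{length x..N}. ?F (l - 2))"
      using step1 True by simp
    also have "\<dots> = (\<Sum>m\<in>{length v0..N - 2}. ?F m)"
    proof -
      have "{length x..N} = {length v0 + 2..(N - 2) + 2}" using kx N by auto
      thus ?thesis by (simp only: sum.shift_bounds_cl_nat_ivl) simp
    qed
    also have "\<dots> = (\<Sum>m\<in>{0..N - 2}. ?F m)"
    proof (rule sum.mono_neutral_left)
      show "\<forall>m\<in>{0..N - 2} - {length v0..N - 2}. ?F m = 0"
        by (auto simp: str_binom_long)
    qed auto
    also have "\<dots> = (\<Sum>v\<in>{v. length v \<le> N - 2}. ?H v)"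
    proof -
      have "(\<Sum>m\<in>{0..N - 2}. (\<Sum>v\<in>{v \<in> {v. length v \<le> N - 2}. length v = m}. ?H v)) = (\<Sum>v\<in>{v. length v \<le> N - 2}. ?H v)"
        by (rule sum.group) (auto simp: finite_len_le)
      moreover have "(\<Sum>m\<in>{0..N - 2}. ?F m) = (\<Sum>m\<in>{0..N - 2}. (\<Sum>v\<in>{v \<in> {v. length v \<le> N - 2}. length v = m}. ?H v))"
      proof (rule sum.cong[OF refl])
        fix m assume "m \<in> {0..N-2}"
        hence "{v \<in> {v. length v \<le> N - 2}. length v = m} = {v. length v = m}" by auto
        thus "?F m = (\<Sum>v\<in>{v \<in> {v. length v \<le> N - 2}. length v = m}. ?H v)" by (rule ssubst) (rule refl)
      qed
      ultimately show ?thesis by (rule trans[rotated])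
    qed
    also have "\<dots> = Phi p c (N - 2) v0 s" by (simp add: Phi_def)
    finally show ?thesis using True by simp
  qed
qed


lemma length_nths_le: "length (nths xs I) \<le> length xs"
proof -
  have "card {i. i < length xs \<and> i \<in> I} \<le> card {..<length xs}" by (rule card_mono) auto
  thus ?thesis by (simp add: length_nths)
qed

lemma Pvec_zero: "length t < i + length y - 1 \<Longrightarrow> Pvec p t y i = 0"
  unfolding Pvec_def
  by (rule sum.neutral) (auto simp: occurs_at_def dest: order_trans[OF _ length_nths_le])

lemma main:
  assumes p: "p < 1" and k: "2 \<le> length x"
  shows "length s < N \<Longrightarrow> 1 \<le> i \<Longrightarrow> (1-p)^length x * Kvec p s x i = S p x N s i"
proof (induction s arbitrary: i)
  case Nil
  have "S p x N [] i = 0" unfolding S_def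
  proof (intro sum.neutral ballI)
    fix l y assume "l \<in> {length x..N}" "y \<in> Yset l x"
    hence "length y \<ge> 2" using k by (auto simp: Yset_def)
    hence "Pvec p [] y i = 0" using Nil.prems by (intro Pvec_zero) auto
    thus "(-1)^(l - length x) * (p/(1-p))^(l - length x) * real (str_binom' y x) * Pvec p [] y i = 0" by simp
  qed
  moreover have "Kvec p [] x i = 0" using Nil.prems by (simp add: Kvec_def)
  ultimately show ?case by simp
next
  case (Cons b s)
  have sN: "length s < N" using Cons.prems by simp
  show ?case
  proof (cases "i = 1")
    case False
    then obtain i' where i': "i = Suc i'" "1 \<le> i'" using Cons.prems by (cases i) auto
    have "(1-p)^length x * Kvec p (b # s) x i = p * ((1-p)^length x * Kvec p s x (Suc i')) + (1 - p) * ((1-p)^length x * Kvec p s x i')"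
      unfolding i' Kvec_Cons_Suc[OF i'(2)] by (simp add: algebra_simps)
    also have "\<dots> = S p x N (b # s) i"
      unfolding i' S_Cons_Suc[OF i'(2)] using Cons.IH[OF sN] i'(2) by simp
    finally show ?thesis .
  next
    case True
    obtain a w where xw: "x = a # w" using k by (cases x) auto
    have "w \<noteq> []" using k xw by auto
    then obtain v0 c where wv: "w = v0 @ [c]" by (metis rev_exhaust)
    have x: "x = a # v0 @ [c]" using xw wv by simp
    have sN2: "length s + 2 \<le> N" using Cons.prems by simp
    have occ: "occurs_at (b # s) x 1 \<longleftrightarrow> a = b \<and> prefix (v0 @ [c]) s"
      unfolding occurs_at_1 x by auto
    have PL: "Phi p c (N - 2) v0 s = (1-p)^(Suc (length v0)) * (if prefix (v0@[c]) s then 1 else 0)"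
      using Phi_lemma[OF p] sN2 by simp
    have kx: "length x = Suc (Suc (length v0))" using x by simp
    have "(1-p)^length x * Kvec p (b # s) x i = p * ((1-p)^length x * Kvec p s x 1) + (1-p)^length x * (if occurs_at (b # s) x 1 then 1 else 0)"
      unfolding True Kvec_Cons_1 by (simp add: algebra_simps)
    also have "\<dots> = p * S p x N s 1 + (1 - p) * (if a = b then Phi p c (N - 2) v0 s else 0)"
      unfolding Cons.IH[OF sN order_refl] PL occ by (simp add: kx)
    also have "\<dots> = S p x N (b # s) i"
      unfolding True S_Cons_1 S2_lemma[OF x sN2] ..
    finally show ?thesis .
  qed
qed


lemma Yset_self: "Yset (length x) x = {x}"
  by (auto simp: Yset_def dest: subseq_same_length)

theorem lemma1:
  fixes s x :: "bool list" and p :: real and i :: nat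
  assumes "0 \<le> p" and "p < 1"
    and "length x \<ge> 2"
    and "1 \<le> i" and "i + length x \<le> length s + 1"
  shows "Kvec p s x i = 1 / (1 - p) ^ length x *
    (Pvec p s x i - (\<Sum>l\<in>{length x + 1..length s}. \<Sum>y\<in>Yset l x.
        (-1) ^ (length y - length x + 1) * Pvec p s y i * real (str_binom' y x)
          * (p / (1 - p)) ^ (l - length x)))"
proof -
  let ?n = "length s" and ?k = "length x"
  let ?T = "\<lambda>l y. (-1)^(l - ?k) * (p/(1-p))^(l - ?k) * real (str_binom' y x) * Pvec p s y i"
  have M: "(1-p)^?k * Kvec p s x i = S p x (Suc ?n) s i"
    using main[OF assms(2) assms(3)] assms(4) by simp
  have kn: "?k \<le> ?n" using assms(4,5) by simp
  have z: "(\<Sum>y\<in>Yset (Suc ?n) x. ?T (Suc ?n) y) = 0"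
  proof (intro sum.neutral ballI)
    fix y assume "y \<in> Yset (Suc ?n) x"
    hence "length y = Suc ?n" by (rule Yset_length)
    hence "Pvec p s y i = 0" using assms(4) by (intro Pvec_zero) auto
    thus "?T (Suc ?n) y = 0" by simp
  qed
  have "S p x (Suc ?n) s i = S p x ?n s i"
    unfolding S_def using kn z by (simp add: atLeastAtMostSuc_conv)
  also have "\<dots> = (\<Sum>y\<in>Yset ?k x. ?T ?k y) + (\<Sum>l\<in>{Suc ?k..?n}. \<Sum>y\<in>Yset l x. ?T l y)"
    unfolding S_def using kn by (simp add: sum.atLeast_Suc_atMost)
  also have "(\<Sum>y\<in>Yset ?k x. ?T ?k y) = Pvec p s x i"
    by (simp add: Yset_self str_binom'_def str_binom_self)
  also have "(\<Sum>l\<in>{Suc ?k..?n}. \<Sum>y\<in>Yset l x. ?T l y) = - (\<Sum>l\<in>{?k + 1..?n}. \<Sum>y\<in>Yset l x.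
        (-1) ^ (length y - ?k + 1) * Pvec p s y i * real (str_binom' y x) * (p / (1 - p)) ^ (l - ?k))"
    unfolding sum_negf[symmetric] Suc_eq_plus1
  proof (intro sum.cong refl)
    fix l y assume l: "l \<in> {?k + 1..?n}" and y: "y \<in> Yset l x"
    have "length y = l" using y by (rule Yset_length)
    hence e: "length y - ?k + 1 = Suc (l - ?k)" using l by auto
    show "?T l y = - ((-1) ^ (length y - ?k + 1) * Pvec p s y i * real (str_binom' y x) * (p / (1 - p)) ^ (l - ?k))"
      unfolding e by simp
  qed
  finally have "S p x (Suc ?n) s i = Pvec p s x i - (\<Sum>l\<in>{?k + 1..?n}. \<Sum>y\<in>Yset l x.
        (-1) ^ (length y - ?k + 1) * Pvec p s y i * real (str_binom' y x) * (p / (1 - p)) ^ (l - ?k))"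
    by simp
  moreover have "(1-p)^?k \<noteq> 0" using assms(2) by simp
  ultimately show ?thesis using M by (simp add: field_simps)
qed

end
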